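(* For $\lambda,\mu\in\Lambda$ we have $\lambda\leq\mu$ in the Bruhat order if and only if $$\sum_{\substack{1\le i\le n_1+\cdots+n_k\\(\lambda+\rho,\delta_i)\le h}}(-1)^{p_i}\;\geq\sum_{\substack{1\le i\le n_1+\cdots+n_k\\(\mu+\rho,\delta_i)\le h}}(-1)^{p_i}$$ for all $h\in\mathbb{Z}$ and $1\leq k\leq l$, with equality whenever $k=l$.
   Context: Let $(\underline{n},\underline{c})\in\mathbb{N}^l\times\{0,1\}^l$ and $\mathfrak{g}=\mathfrak{gl}(U)$ for the superspace $U=U_1\oplus\cdots\oplus U_l$, $U_i$ of dimension $n_i$ in parity $\bar c_i$, over an algebraically closed field of characteristic $0$. Homogeneous basis $u_1,\dots,u_{m+n}$ ($m+n=\sum n_i$) concatenating bases of $U_1,\dots,U_l$; $p_i$ the parity of $u_i$; $\delta_i$ the standard basis of $\mathfrak{t}^*$ dual to the diagonal matrix units, $(\delta_i,\delta_j)=(-1)^{p_i}\delta_{ij}$; $\rho=-\sum_{i<j}(-1)^{p_i+p_j}\delta_j-\sum_{p_i=\bar1}\delta_i$; $\mathfrak{t}^*_{\mathbb{Z}}=\bigoplus\mathbb{Z}\delta_i$. Bruhat order: $\lambda\leq\mu$ iff for all $h\in\mathbb{Z}$ and $1\le j\le m+n$, $\sum_{1\le i\le j,\,(\lambda+\rho,\delta_i)\le h}(-1)^{p_i}\geq\sum_{1\le i\le j,\,(\mu+\rho,\delta_i)\le h}(-1)^{p_i}$, with equality when $j=m+n$. $\Lambda:=\{\lambda\in\mathfrak{t}^*_{\mathbb{Z}}:(-1)^{c_k}(\lambda+\rho,\delta_i-\delta_{i+1})>0$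 for all $1\le k\le l$ and $n_1+\cdots+n_{k-1}<i<n_1+\cdots+n_k\}$. *)

theory Defs
  imports Main
begin

text \<open>Data: l blocks; block k (1 <= k <= l) has dimension n k and parity c k
  (True = odd). Basis indices are 1..dimU n l, block k occupies indices
  psum n (k-1) < i <= psum n k. Weights in t*_Z are integer coefficient
  functions lam :: nat => int, lam i = coefficient of delta_i (zero off 1..dimU).\<close>

definition psum :: "(nat \<Rightarrow> nat) \<Rightarrow> nat \<Rightarrow> nat" where
  "psum n k = (\<Sum>j=1..k. n j)"

definition dimU :: "(nat \<Rightarrow> nat) \<Rightarrow> nat \<Rightarrow> nat" where
  "dimU n l = psum n l"

definition par :: "(nat \<Rightarrow> nat) \<Rightarrow> (nat \<Rightarrow> bool) \<Rightarrow> nat \<Rightarrow> nat \<Rightarrow> bool" where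
  "par n c l i = (\<exists>k\<in>{1..l}. psum n (k-1) < i \<and> i \<le> psum n k \<and> c k)"

definition sg :: "(nat \<Rightarrow> nat) \<Rightarrow> (nat \<Rightarrow> bool) \<Rightarrow> nat \<Rightarrow> nat \<Rightarrow> int" where
  "sg n c l i = (if par n c l i then -1 else 1)"

definition weights :: "(nat \<Rightarrow> nat) \<Rightarrow> nat \<Rightarrow> (nat \<Rightarrow> int) set" where
  "weights n l = {lam. \<forall>i. i \<notin> {1..dimU n l} \<longrightarrow> lam i = 0}"

definition bform :: "(nat \<Rightarrow> nat) \<Rightarrow> (nat \<Rightarrow> bool) \<Rightarrow> nat \<Rightarrow> (nat \<Rightarrow> int) \<Rightarrow> (nat \<Rightarrow> int) \<Rightarrow> int" where
  "bform n c l lam mu = (\<Sum>i=1..dimU n l. sg n c l i * lam i * mu i)"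

definition delta :: "nat \<Rightarrow> nat \<Rightarrow> int" where
  "delta i = (\<lambda>j. if j = i then 1 else 0)"

definition rho :: "(nat \<Rightarrow> nat) \<Rightarrow> (nat \<Rightarrow> bool) \<Rightarrow> nat \<Rightarrow> nat \<Rightarrow> int" where
  "rho n c l j = (if j \<in> {1..dimU n l} then
      - (\<Sum>i\<in>{1..<j}. sg n c l i * sg n c l j) - (if par n c l j then 1 else 0)
    else 0)"

definition ip :: "(nat \<Rightarrow> nat) \<Rightarrow> (nat \<Rightarrow> bool) \<Rightarrow> nat \<Rightarrow> (nat \<Rightarrow> int) \<Rightarrow> nat \<Rightarrow> int" where
  "ip n c l lam i = bform n c l (\<lambda>j. lam j + rho n c l j) (delta i)"

definition cnt :: "(nat \<Rightarrow> nat) \<Rightarrow> (nat \<Rightarrow> bool) \<Rightarrow> nat \<Rightarrow> (nat \<Rightarrow> int) \<Rightarrow> nat \<Rightarrow> int \<Rightarrow> int" where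
  "cnt n c l lam j h = (\<Sum>i\<in>{i\<in>{1..j}. ip n c l lam i \<le> h}. sg n c l i)"

definition bruhat_le :: "(nat \<Rightarrow> nat) \<Rightarrow> (nat \<Rightarrow> bool) \<Rightarrow> nat \<Rightarrow> (nat \<Rightarrow> int) \<Rightarrow> (nat \<Rightarrow> int) \<Rightarrow> bool" where
  "bruhat_le n c l lam mu \<longleftrightarrow>
     (\<forall>h::int. \<forall>j\<in>{1..dimU n l}. cnt n c l lam j h \<ge> cnt n c l mu j h) \<and>
     (\<forall>h::int. cnt n c l lam (dimU n l) h = cnt n c l mu (dimU n l) h)"

definition Lam :: "(nat \<Rightarrow> nat) \<Rightarrow> (nat \<Rightarrow> bool) \<Rightarrow> nat \<Rightarrow> (nat \<Rightarrow> int) set" where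
  "Lam n c l = {lam \<in> weights n l. \<forall>k\<in>{1..l}. \<forall>i. psum n (k-1) < i \<and> i < psum n k \<longrightarrow>
      (if c k then -1 else 1) *
        bform n c l (\<lambda>j. lam j + rho n c l j) (\<lambda>j. delta i j - delta (i+1) j) > 0}"

end

theory Submission
  imports Defs
begin

lemma psum_mono: "k \<le> k' \<Longrightarrow> psum n k \<le> psum n k'"
  unfolding psum_def by (rule sum_mono2) auto

lemma psum_0[simp]: "psum n 0 = 0"
  unfolding psum_def by simp

lemma par_block:
  assumes "k \<in> {1..l}" "psum n (k-1) < i" "i \<le> psum n k"
  shows "par n c l i = c k"
proof
  assume "par n c l i"
  then obtain k' where k': "k'\<in>{1..l}" "psum n (k'-1) < i" "i \<le> psum n k'" "c k'"
    unfolding par_def by blast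
  have "k' = k"
  proof (rule ccontr)
    assume "k' \<noteq> k"
    then consider "k' < k" | "k < k'" by linarith
    then show False
    proof cases
      case 1 then have "psum n k' \<le> psum n (k-1)" by (intro psum_mono) auto
      then show False using k' assms by linarith
    next
      case 2 then have "psum n k \<le> psum n (k'-1)" by (intro psum_mono) auto
      then show False using k' assms by linarith
    qed
  qed
  then show "c k" using k' by simp
next
  assume "c k" then show "par n c l i" unfolding par_def using assms by blast
qed

lemma bform_diff:
  "bform n c l x (\<lambda>j. delta i j - delta (i+1) j) = bform n c l x (delta i) - bform n c l x (delta (i+1))"
  unfolding bform_def by (simp add: sum_subtractf[symmetric] algebra_simps)

lemma cnt_eq: "cnt n c l lam j h = (\<Sum>i=1..j. if ip n c l lam i \<le> h then sg n c l i else 0)"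
  unfolding cnt_def by (rule sum.inter_filter) simp

lemma find_block:
  assumes "j \<in> {1..psum n l}"
  shows "\<exists>k\<in>{1..l}. psum n (k-1) < j \<and> j \<le> psum n k"
proof -
  define k where "k = (LEAST k. j \<le> psum n k)"
  have ex: "j \<le> psum n l" using assms by auto
  have kl: "k \<le> l" unfolding k_def by (rule Least_le) (rule ex)
  have jk: "j \<le> psum n k" unfolding k_def by (rule LeastI) (rule ex)
  have k0: "k \<ge> 1" proof (rule ccontr)
    assume "\<not> 1 \<le> k" then have "k = 0" by simp
    then show False using jk assms by simp
  qed
  have "\<not> j \<le> psum n (k-1)" unfolding k_def
    by (rule not_less_Least) (use k0 in \<open>simp add: k_def\<close>)
  then show ?thesis using kl jk k0 by (intro bexI[of _ k]) auto
qed

lemma ip_step: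
  assumes "lam \<in> Lam n c l" "k \<in> {1..l}" "psum n (k-1) < i" "i < psum n k"
  shows "if c k then ip n c l lam i < ip n c l lam (i+1) else ip n c l lam i > ip n c l lam (i+1)"
proof -
  have "(if c k then -1 else 1) *
        bform n c l (\<lambda>j. lam j + rho n c l j) (\<lambda>j. delta i j - delta (i+1) j) > 0"
    using assms unfolding Lam_def by blast
  then show ?thesis unfolding bform_diff ip_def by (auto split: if_splits)
qed

lemma ip_mono:
  assumes "lam \<in> Lam n c l" "k \<in> {1..l}" "psum n (k-1) < i"  "psum n k \<ge> i + Suc d"
  shows "if c k then ip n c l lam i < ip n c l lam (i + Suc d) else ip n c l lam i > ip n c l lam (i + Suc d)"
  using assms(4)
proof (induction d)
  case 0
  then show ?case using ip_step[OF assms(1,2,3)] by (cases "c k") auto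
next
  case (Suc d)
  have "psum n (k-1) < i + Suc d" "i + Suc d < psum n k" using Suc.prems assms(3) by auto
  from ip_step[OF assms(1,2) this] Suc.IH Suc.prems show ?case by (cases "c k") auto
qed

lemma ip_closed:
  assumes "lam \<in> Lam n c l" "k \<in> {1..l}" "psum n (k-1) < i" "i < i'" "i' \<le> psum n k"
  shows "if c k then ip n c l lam i < ip n c l lam i' else ip n c l lam i > ip n c l lam i'"
proof -
  obtain d where "i' = i + Suc d" using assms(4) less_iff_Suc_add by auto
  then show ?thesis using ip_mono[OF assms(1,2,3), of d] assms(5) by (cases "c k") auto
qed

lemma sign_lemma:
  fixes P Q :: "nat \<Rightarrow> bool"
  assumes "\<forall>i\<in>B. \<forall>i'\<in>B. ((P i \<longrightarrow> P i') \<and> (Q i \<longrightarrow> Q i')) \<or> ((P i' \<longrightarrow> P i) \<and> (Q i' \<longrightarrow> Q i))"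
  shows "(\<forall>i\<in>B. of_bool (P i) - of_bool (Q i) \<ge> (0::int)) \<or> (\<forall>i\<in>B. of_bool (P i) - of_bool (Q i) \<le> (0::int))"
proof (rule ccontr)
  assume "\<not> ?thesis"
  then obtain i i' where "i \<in> B" "i' \<in> B" "\<not> P i" "Q i" "P i'" "\<not> Q i'"
    by (auto split: if_splits)
  then show False using assms by blast
qed

lemma split_sum:
  fixes f :: "nat \<Rightarrow> int"
  assumes "a \<le> j"
  shows "(\<Sum>i=1..j. f i) = (\<Sum>i=1..a. f i) + (\<Sum>i\<in>{a<..j}. f i)"
proof -
  have "{1..j} = {1..a} \<union> {a<..j}" using assms by auto
  then show ?thesis by (simp add: sum.union_disjoint ivl_disj_int)
qed

theorem lemma3p9:
  fixes n :: "nat \<Rightarrow> nat" and c :: "nat \<Rightarrow> bool" and l :: nat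
    and lam mu :: "nat \<Rightarrow> int"
  assumes "lam \<in> Lam n c l" and "mu \<in> Lam n c l"
  shows "bruhat_le n c l lam mu \<longleftrightarrow>
    ((\<forall>h::int. \<forall>k\<in>{1..l}. cnt n c l lam (psum n k) h \<ge> cnt n c l mu (psum n k) h) \<and>
     (\<forall>h::int. cnt n c l lam (psum n l) h = cnt n c l mu (psum n l) h))"
proof
  assume B: "bruhat_le n c l lam mu"
  have "cnt n c l lam (psum n k) h \<ge> cnt n c l mu (psum n k) h" if "k \<in> {1..l}" for h k
  proof (cases "psum n k = 0")
    case True then show ?thesis by (simp add: cnt_eq)
  next
    case False
    have "psum n k \<le> psum n l" using that by (intro psum_mono) auto
    then have "psum n k \<in> {1..dimU n l}" using False by (auto simp: dimU_def)
    then show ?thesis using B unfolding bruhat_le_def by blast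
  qed
  then show "((\<forall>h::int. \<forall>k\<in>{1..l}. cnt n c l lam (psum n k) h \<ge> cnt n c l mu (psum n k) h) \<and>
     (\<forall>h::int. cnt n c l lam (psum n l) h = cnt n c l mu (psum n l) h))"
    using B unfolding bruhat_le_def dimU_def by blast
next
  assume H: "((\<forall>h::int. \<forall>k\<in>{1..l}. cnt n c l lam (psum n k) h \<ge> cnt n c l mu (psum n k) h) \<and>
     (\<forall>h::int. cnt n c l lam (psum n l) h = cnt n c l mu (psum n l) h))"
  have "cnt n c l lam j h \<ge> cnt n c l mu j h" if j: "j \<in> {1..dimU n l}" for h j
  proof -
    obtain k where k: "k \<in> {1..l}" "psum n (k-1) < j" "j \<le> psum n k"
      using find_block[of j n l] j by (auto simp: dimU_def)
    define a where "a = psum n (k-1)"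
    define b where "b = psum n k"
    define e where "e i = (if ip n c l lam i \<le> h then sg n c l i else 0) -
                          (if ip n c l mu i \<le> h then sg n c l i else 0)" for i
    define D where "D x = (\<Sum>i=1..x. e i)" for x
    have Dcnt: "D x = cnt n c l lam x h - cnt n c l mu x h" for x
      unfolding D_def e_def cnt_eq by (simp add: sum_subtractf)
    have Da: "D a \<ge> 0"
    proof (cases "k = 1")
      case True then show ?thesis by (simp add: a_def D_def)
    next
      case False
      then have "k - 1 \<in> {1..l}" using k by auto
      then show ?thesis using H by (simp add: Dcnt a_def)
    qed
    have Db: "D b \<ge> 0" using H k by (simp add: Dcnt b_def)
    define s :: int where "s = (if c k then -1 else 1)"
    have es: "e i = s * (of_bool (ip n c l lam i \<le> h) - of_bool (ip n c l mu i \<le> h))"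
      if "i \<in> {a<..b}" for i
    proof -
      have "par n c l i = c k" using par_block[OF k(1)] that by (auto simp: a_def b_def)
      then show ?thesis by (auto simp: e_def sg_def s_def)
    qed
    have "(\<forall>i\<in>{a<..b}. of_bool (ip n c l lam i \<le> h) - of_bool (ip n c l mu i \<le> h) \<ge> (0::int)) \<or>
          (\<forall>i\<in>{a<..b}. of_bool (ip n c l lam i \<le> h) - of_bool (ip n c l mu i \<le> h) \<le> (0::int))"
    proof (rule sign_lemma, intro ballI)
      fix i i' assume ii: "i \<in> {a<..b}" "i' \<in> {a<..b}"
      have gen: "((ip n c l lam i \<le> h \<longrightarrow> ip n c l lam i' \<le> h) \<and> (ip n c l mu i \<le> h \<longrightarrow> ip n c l mu i' \<le> h))
           \<or> ((ip n c l lam i' \<le> h \<longrightarrow> ip n c l lam i \<le> h) \<and> (ip n c l mu i' \<le> h \<longrightarrow> ip n c l mu i \<le> h))"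
        if "x \<in> {a<..b}" "y \<in> {a<..b}" "x < y" "i = x \<and> i' = y \<or> i = y \<and> i' = x" for x y
      proof -
        have "psum n (k-1) < x" "y \<le> psum n k" using that by (auto simp: a_def b_def)
        note c1 = ip_closed[OF assms(1) k(1) this(1) \<open>x<y\<close> this(2)]
        note c2 = ip_closed[OF assms(2) k(1) \<open>psum n (k-1) < x\<close> \<open>x<y\<close> \<open>y \<le> psum n k\<close>]
        show ?thesis using c1 c2 that(4) by (auto split: if_splits)
      qed
      consider "i < i'" | "i' < i" | "i = i'" by linarith
      then show "((ip n c l lam i \<le> h \<longrightarrow> ip n c l lam i' \<le> h) \<and> (ip n c l mu i \<le> h \<longrightarrow> ip n c l mu i' \<le> h))
           \<or> ((ip n c l lam i' \<le> h \<longrightarrow> ip n c l lam i \<le> h) \<and> (ip n c l mu i' \<le> h \<longrightarrow> ip n c l mu i \<le> h))"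
      proof cases
        case 1 then show ?thesis using gen[of i i'] ii by blast
      next
        case 2 then show ?thesis using gen[of i' i] ii by blast
      next
        case 3 then show ?thesis by blast
      qed
    qed
    then have sgn: "(\<forall>i\<in>{a<..b}. e i \<ge> 0) \<or> (\<forall>i\<in>{a<..b}. e i \<le> 0)"
      using es by (auto simp: s_def split: if_splits)
    have aj: "a \<le> j" "j \<le> b" using k by (auto simp: a_def b_def)
    have D1: "D j = D a + (\<Sum>i\<in>{a<..j}. e i)" unfolding D_def by (rule split_sum[OF aj(1)])
    have D2: "D b = D j + (\<Sum>i\<in>{j<..b}. e i)" unfolding D_def by (rule split_sum[OF aj(2)])
    have "D j \<ge> 0"
      using sgn
    proof
      assume "\<forall>i\<in>{a<..b}. e i \<ge> 0"
      then have "(\<Sum>i\<in>{a<..j}. e i) \<ge> 0" using aj by (intro sum_nonneg) auto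
      then show ?thesis using D1 Da by linarith
    next
      assume "\<forall>i\<in>{a<..b}. e i \<le> 0"
      then have "(\<Sum>i\<in>{j<..b}. e i) \<le> 0" using aj by (intro sum_nonpos) auto
      then show ?thesis using D2 Db by linarith
    qed
    then show ?thesis by (simp add: Dcnt)
  qed
  then show "bruhat_le n c l lam mu" using H unfolding bruhat_le_def dimU_def by blast
qed

end
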